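(* Let $A\in\{0,1\}^{N\times n}$ and, for unit vectors $U_1,\dots,U_N,V_1,\dots,V_n\in\mathbb{R}^d$, $t>0$ and $b\in\mathbb{R}$, define $$\mathcal{L}(\{U_j\},\{V_i\};t,b)=\sum_{j\in[N],\,i\in[n]}\log\Bigl(1+\exp\bigl((-1)^{A_{ji}}(t\langle U_j,V_i\rangle-b)\bigr)\Bigr).$$ (1) If $\mathcal{L}(\{U_j\},\{V_i\};t,b)<\log 2$, then there exists $m>0$ such that $\{U_j\},\{V_i\}$ is a margin-$m$, relative-bias-$\frac bt$ embedding of $A$. (2) If $\{U_j\},\{V_i\}$ is a margin-$m_*$, relative-bias-$\tau$ embedding of $A$, where $$m_*:=\min\Bigl\{\min_{A_{ji}=1}(\langle U_j,V_i\rangle-\tau),\ \min_{A_{ji}=0}(\tau-\langle U_j,V_i\rangle)\Bigr\}>0,$$ then $\lim_{T\to\infty}\frac1T\log\mathcal{L}(\{U_j\},\{V_i\};T,T\tau)=-m_*$.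
   Context: For $A\in\{0,1\}^{N\times n}$, $m\ge0$ and $\tau\in\mathbb{R}$, unit vectors $U_1,\dots,U_N,V_1,\dots,V_n\in\mathbb{R}^d$ form a margin-$m$, relative-bias-$\tau$ embedding of $A$ if $\langle U_j,V_i\rangle\ge\tau+m$ whenever $A_{ji}=1$ and $\langle U_j,V_i\rangle\le\tau-m$ whenever $A_{ji}=0$. *)

theory Defs
  imports "HOL-Analysis.Analysis"
begin

text \<open>Matrix A in {0,1}^(N x n) is a function nat => nat => nat, indices j < N, i < n.
  Vectors U_1..U_N, V_1..V_n live in a Euclidean space 'a (dimension d = DIM('a)).\<close>

definition is_embedding ::
  "nat \<Rightarrow> nat \<Rightarrow> (nat \<Rightarrow> nat \<Rightarrow> nat) \<Rightarrow> (nat \<Rightarrow> 'a::real_inner) \<Rightarrow> (nat \<Rightarrow> 'a)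
   \<Rightarrow> real \<Rightarrow> real \<Rightarrow> bool" where
  "is_embedding N n A U V m \<tau> \<longleftrightarrow>
     m \<ge> 0 \<and>
     (\<forall>j<N. norm (U j) = 1) \<and> (\<forall>i<n. norm (V i) = 1) \<and>
     (\<forall>j<N. \<forall>i<n. A j i = 1 \<longrightarrow> inner (U j) (V i) \<ge> \<tau> + m) \<and>
     (\<forall>j<N. \<forall>i<n. A j i = 0 \<longrightarrow> inner (U j) (V i) \<le> \<tau> - m)"

definition sig_loss ::
  "nat \<Rightarrow> nat \<Rightarrow> (nat \<Rightarrow> nat \<Rightarrow> nat) \<Rightarrow> (nat \<Rightarrow> 'a::real_inner) \<Rightarrow> (nat \<Rightarrow> 'a)
   \<Rightarrow> real \<Rightarrow> real \<Rightarrow> real" where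
  "sig_loss N n A U V t b =
     (\<Sum>j<N. \<Sum>i<n. ln (1 + exp ((-1) ^ (A j i) * (t * inner (U j) (V i) - b))))"

definition max_margin ::
  "nat \<Rightarrow> nat \<Rightarrow> (nat \<Rightarrow> nat \<Rightarrow> nat) \<Rightarrow> (nat \<Rightarrow> 'a::real_inner) \<Rightarrow> (nat \<Rightarrow> 'a)
   \<Rightarrow> real \<Rightarrow> real" where
  "max_margin N n A U V \<tau> =
     Min ({inner (U j) (V i) - \<tau> | j i. j < N \<and> i < n \<and> A j i = 1} \<union>
          {\<tau> - inner (U j) (V i) | j i. j < N \<and> i < n \<and> A j i = 0})"

end

theory Submission
  imports Defs
begin

lemma ln_lower: assumes "0 \<le> (x::real)" "x \<le> 1" shows "x/2 \<le> ln (1+x)"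
proof -
  have "ln (1/(1+x)) \<le> 1/(1+x) - 1" using assms by (intro ln_le_minus_one) auto
  hence "x/(1+x) \<le> ln (1+x)" using assms by (simp add: ln_div field_simps)
  moreover have "x/2 \<le> x/(1+x)"
  proof -
    have "x*x \<le> x" using mult_left_mono[of x 1 x] assms by simp
    thus ?thesis using assms by (simp add: field_simps)
  qed
  ultimately show ?thesis by linarith
qed

lemma lim_aux: "((\<lambda>T::real. c / T + M) \<longlongrightarrow> M) at_top"
proof -
  have "((\<lambda>T::real. c / T + M) \<longlongrightarrow> 0 + M) at_top"
    by (intro tendsto_add tendsto_divide_0[OF tendsto_const] filterlim_at_top_imp_at_infinity filterlim_ident tendsto_const)
  thus ?thesis by simp
qed

theorem propositionG4:
  fixes N n :: nat and A :: "nat \<Rightarrow> nat \<Rightarrow> nat"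
    and U V :: "nat \<Rightarrow> 'a::euclidean_space"
  assumes "N > 0" and "n > 0"
    and "\<forall>j<N. \<forall>i<n. A j i \<in> {0, 1}"
    and "\<forall>j<N. norm (U j) = 1" and "\<forall>i<n. norm (V i) = 1"
  shows "(\<forall>t b. t > 0 \<longrightarrow> sig_loss N n A U V t b < ln 2 \<longrightarrow>
             (\<exists>m>0. is_embedding N n A U V m (b / t)))
       \<and> (\<forall>\<tau>. max_margin N n A U V \<tau> > 0 \<longrightarrow>
             is_embedding N n A U V (max_margin N n A U V \<tau>) \<tau> \<longrightarrow>
             ((\<lambda>T. ln (sig_loss N n A U V T (T * \<tau>)) / T)
                \<longlongrightarrow> - max_margin N n A U V \<tau>) at_top)"
proof (intro conjI allI impI)
  fix t b :: real
  assume t: "t > 0" and L: "sig_loss N n A U V t b < ln 2"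
  define f where "f j i = ln (1 + exp ((-1) ^ (A j i) * (t * inner (U j) (V i) - b)))" for j i
  have fpos: "f j i > 0" for j i unfolding f_def by (simp add: add_pos_pos)
  have fle: "f j i < ln 2" if "j < N" "i < n" for j i
  proof -
    have "f j i \<le> (\<Sum>i<n. f j i)" using that fpos by (intro member_le_sum) (auto intro: less_imp_le)
    also have "\<dots> \<le> (\<Sum>j<N. \<Sum>i<n. f j i)" using that fpos
      by (intro member_le_sum[where f="\<lambda>j. \<Sum>i<n. f j i"]) (auto intro: sum_nonneg less_imp_le)
    finally show ?thesis using L unfolding sig_loss_def f_def by simp
  qed
  have neg: "(-1) ^ (A j i) * (t * inner (U j) (V i) - b) < 0" if "j < N" "i < n" for j i
  proof -
    have "ln (1 + exp ((-1) ^ (A j i) * (t * inner (U j) (V i) - b))) < ln 2"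
      using fle[OF that] unfolding f_def .
    hence "1 + exp ((-1) ^ (A j i) * (t * inner (U j) (V i) - b)) < 2"
      by (simp add: add_pos_pos)
    thus ?thesis by simp
  qed
  define D where "D = {\<bar>inner (U j) (V i) - b/t\<bar> | j i. j < N \<and> i < n}"
  have Dimg: "D = (\<lambda>(j,i). \<bar>inner (U j) (V i) - b/t\<bar>) ` ({..<N} \<times> {..<n})"
    unfolding D_def by auto
  have Dfin: "finite D" unfolding Dimg by auto
  have Dne: "D \<noteq> {}" using assms(1,2) unfolding D_def by auto
  have side1: "inner (U j) (V i) > b/t" if "j < N" "i < n" "A j i = 1" for j i
  proof -
    have "- (t * inner (U j) (V i) - b) < 0" using neg[OF that(1,2)] that(3) by simp
    hence "b < t * inner (U j) (V i)" by simp
    thus ?thesis using t by (simp add: divide_less_eq mult.commute)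
  qed
  have side0: "inner (U j) (V i) < b/t" if "j < N" "i < n" "A j i = 0" for j i
  proof -
    have "t * inner (U j) (V i) - b < 0" using neg[OF that(1,2)] that(3) by simp
    hence "t * inner (U j) (V i) < b" by simp
    thus ?thesis using t by (simp add: less_divide_eq mult.commute)
  qed
  have Dpos: "\<forall>x\<in>D. x > 0"
  proof
    fix x assume "x \<in> D"
    then obtain j i where ji: "j < N" "i < n" "x = \<bar>inner (U j) (V i) - b/t\<bar>" unfolding D_def by auto
    have "A j i = 0 \<or> A j i = 1" using assms(3) ji by auto
    thus "x > 0" using side0[OF ji(1,2)] side1[OF ji(1,2)] ji(3) by auto
  qed
  define m where "m = Min D"
  have mpos: "m > 0" unfolding m_def using Dfin Dne Dpos by auto
  have mle: "m \<le> \<bar>inner (U j) (V i) - b/t\<bar>" if "j < N" "i < n" for j i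
    unfolding m_def using Dfin that by (intro Min_le) (auto simp: D_def)
  have "is_embedding N n A U V m (b / t)"
    unfolding is_embedding_def
  proof (intro conjI allI impI)
    show "0 \<le> m" using mpos by simp
  next
    fix j i assume "j < N" "i < n" "A j i = 1"
    thus "b / t + m \<le> inner (U j) (V i)" using side1 mle by fastforce
  next
    fix j i assume "j < N" "i < n" "A j i = 0"
    thus "inner (U j) (V i) \<le> b / t - m" using side0 mle by fastforce
  qed (use assms in auto)
  thus "\<exists>m>0. is_embedding N n A U V m (b / t)" using mpos by blast
next
  fix \<tau> :: real
  let ?M = "max_margin N n A U V \<tau>"
  assume Mpos: "?M > 0"
  define S1 where "S1 = {inner (U j) (V i) - \<tau> | j i. j < N \<and> i < n \<and> A j i = 1}"
  define S0 where "S0 = {\<tau> - inner (U j) (V i) | j i. j < N \<and> i < n \<and> A j i = 0}"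
  define s where "s j i = (if A j i = 1 then inner (U j) (V i) - \<tau> else \<tau> - inner (U j) (V i))" for j i
  have Seq: "S1 \<union> S0 = (\<lambda>(j,i). s j i) ` ({..<N} \<times> {..<n})"
  proof
    show "S1 \<union> S0 \<subseteq> (\<lambda>(j,i). s j i) ` ({..<N} \<times> {..<n})"
    proof
      fix x assume "x \<in> S1 \<union> S0"
      then obtain j i where ji: "j < N" "i < n" "x = s j i"
        unfolding S1_def S0_def s_def by (auto split: if_splits)
      thus "x \<in> (\<lambda>(j,i). s j i) ` ({..<N} \<times> {..<n})"
        by (intro rev_image_eqI[of "(j,i)"]) auto
    qed
  next
    show "(\<lambda>(j,i). s j i) ` ({..<N} \<times> {..<n}) \<subseteq> S1 \<union> S0"
    proof
      fix x assume "x \<in> (\<lambda>(j,i). s j i) ` ({..<N} \<times> {..<n})"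
      then obtain j i where ji: "j < N" "i < n" "x = s j i" by auto
      have "A j i = 0 \<or> A j i = 1" using assms(3) ji by auto
      thus "x \<in> S1 \<union> S0"
      proof
        assume "A j i = 0"
        hence "x \<in> S0" unfolding S0_def using ji by (auto simp: s_def)
        thus ?thesis by simp
      next
        assume "A j i = 1"
        hence "x \<in> S1" unfolding S1_def using ji by (auto simp: s_def)
        thus ?thesis by simp
      qed
    qed
  qed
  have M: "?M = Min (S1 \<union> S0)" unfolding max_margin_def S1_def S0_def by simp
  have fin: "finite (S1 \<union> S0)" unfolding Seq by auto
  have ne: "S1 \<union> S0 \<noteq> {}" unfolding Seq using assms(1,2) by auto
  have sge: "s j i \<ge> ?M" if "j < N" "i < n" for j i
    unfolding M using fin that by (intro Min_le) (auto simp: Seq)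
  have "?M \<in> S1 \<union> S0" using Min_in[OF fin ne] M by simp
  hence "?M \<in> (\<lambda>(j,i). s j i) ` ({..<N} \<times> {..<n})" by (simp only: Seq)
  then obtain j0 i0 where ji0: "j0 < N" "i0 < n" "s j0 i0 = ?M" by auto
  have term_eq: "(-1) ^ (A j i) * (T * inner (U j) (V i) - T * \<tau>) = - T * s j i"
    if "j < N" "i < n" for j i T
  proof -
    have "A j i = 0 \<or> A j i = 1" using assms(3) that by auto
    thus ?thesis unfolding s_def by (auto simp: algebra_simps)
  qed
  have Leq: "sig_loss N n A U V T (T * \<tau>) = (\<Sum>j<N. \<Sum>i<n. ln (1 + exp (- T * s j i)))" for T
    unfolding sig_loss_def using term_eq by (intro sum.cong refl) auto
  have bounds: "- ?M - ln 2 / T \<le> ln (sig_loss N n A U V T (T * \<tau>)) / T \<and>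
      ln (sig_loss N n A U V T (T * \<tau>)) / T \<le> ln (real N * real n) / T - ?M" if T: "T > 0" for T
  proof -
    define g where "g j i = ln (1 + exp (- T * s j i))" for j i
    have gpos: "g j i > 0" for j i unfolding g_def by (simp add: add_pos_pos)
    have gup: "g j i \<le> exp (- T * ?M)" if "j < N" "i < n" for j i
    proof -
      have "g j i \<le> exp (- T * s j i)" unfolding g_def by (rule ln_add_one_self_le_self) simp
      also have "\<dots> \<le> exp (- T * ?M)" using sge[OF that] T by simp
      finally show ?thesis .
    qed
    define L where "L = (\<Sum>j<N. \<Sum>i<n. g j i)"
    have Lup: "L \<le> real N * real n * exp (- T * ?M)"
    proof -
      have "L \<le> (\<Sum>j<N. \<Sum>i<n. exp (- T * ?M))" unfolding L_def
        using gup by (intro sum_mono) auto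
      thus ?thesis by simp
    qed
    have "g j0 i0 \<le> (\<Sum>i<n. g j0 i)" using ji0 gpos by (intro member_le_sum) (auto intro: less_imp_le)
    also have "\<dots> \<le> L" unfolding L_def using ji0 gpos
      by (intro member_le_sum[where f="\<lambda>j. \<Sum>i<n. g j i"]) (auto intro: sum_nonneg less_imp_le)
    finally have Llow: "g j0 i0 \<le> L" .
    have "exp (- T * ?M) / 2 \<le> g j0 i0" unfolding g_def ji0(3)
      using T Mpos by (intro ln_lower) auto
    hence Llow2: "exp (- T * ?M) / 2 \<le> L" using Llow by linarith
    have Lpos: "L > 0" using Llow2 exp_gt_zero[of "- T * ?M"] by linarith
    have "ln (exp (- T * ?M) / 2) \<le> ln L" using Llow2 by (intro ln_mono) auto
    hence lo: "- T * ?M - ln 2 \<le> ln L" by (simp add: ln_div)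
    have "ln L \<le> ln (real N * real n * exp (- T * ?M))" using Lup Lpos by simp
    hence hi: "ln L \<le> ln (real N * real n) - T * ?M" using assms(1,2) by (simp add: ln_mult)
    have LL: "sig_loss N n A U V T (T * \<tau>) = L" unfolding Leq L_def g_def ..
    have "- ?M - ln 2 / T = (- T * ?M - ln 2) / T" using T by (simp add: field_simps)
    also have "\<dots> \<le> ln L / T" using lo T by (intro divide_right_mono) auto
    finally have A1: "- ?M - ln 2 / T \<le> ln L / T" .
    have "ln L / T \<le> (ln (real N * real n) - T * ?M) / T" using hi T by (intro divide_right_mono) auto
    also have "\<dots> = ln (real N * real n) / T - ?M" using T by (simp add: field_simps)
    finally show ?thesis using A1 LL by simp
  qed
  show "((\<lambda>T. ln (sig_loss N n A U V T (T * \<tau>)) / T) \<longlongrightarrow> - ?M) at_top"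
  proof (rule tendsto_sandwich[where f="\<lambda>T. (- ln 2) / T + (- ?M)" and h="\<lambda>T. ln (real N * real n) / T + (- ?M)"])
    show "\<forall>\<^sub>F T in at_top. (- ln 2) / T + (- ?M) \<le> ln (sig_loss N n A U V T (T * \<tau>)) / T"
      using eventually_gt_at_top[of "0::real"] by eventually_elim (drule bounds, linarith)
    show "\<forall>\<^sub>F T in at_top. ln (sig_loss N n A U V T (T * \<tau>)) / T \<le> ln (real N * real n) / T + (- ?M)"
      using eventually_gt_at_top[of "0::real"] by eventually_elim (drule bounds, linarith)
  qed (rule lim_aux)+
qed

end
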